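(* Let $\mathcal{H}$ be a Hilbert space, $\{\mathcal{H}_i : i\in I\}$ a sequence of Hilbert spaces ($I\subseteq\mathbb{Z}$), and let $\Lambda=\{\Lambda_i\in\mathcal{L}(\mathcal{H},\mathcal{H}_i): i\in I\}$ be a $g$-frame for $\mathcal{H}$ with $g$-frame operator $S_\Lambda f=\sum_{i\in I}\Lambda_i^*\Lambda_i f$. Let $C,C'\in\mathcal{GL}^+(\mathcal{H})$ be such that $C$ and $C'$ commute with each other and each commutes with $S_\Lambda$. Then $\Lambda$ is a $(C,C')$-controlled $g$-frame for $\mathcal{H}$.
   Context: $\mathcal{L}(\mathcal{H},\mathcal{K})$ denotes the bounded linear operators from $\mathcal{H}$ to $\mathcal{K}$. $\mathcal{GL}^+(\mathcal{H})$ denotes the set of positive bounded operators on $\mathcal{H}$ (i.e. $\langle Tf,f\rangle>0$ for $f\neq 0$) having a bounded inverse. A family $\Lambda=\{\Lambda_i\in\mathcal{L}(\mathcal{H},\mathcal{H}_i)\}_{i\in I}$ is a $g$-frame for $\mathcal{H}$ if there are constants $0<A\le B<\infty$ with $A\|f\|^2\le\sum_{i\in I}\|\Lambda_i f\|^2\le B\|f\|^2$ for all $f\in\mathcal{H}$; it is a $g$-Bessel sequence if the upper inequality holds. For $C,C'\in\mathcal{GL}^+(\mathcal{H})$, $\Lambda$ is a $(C,C')$-controlled $g$-frame if $\Lambda$ is a $g$-Bessel sequence and there exist constants $A>0$, $B<\infty$ such that $A\|f\|^2\le\sum_{i\in I}\langle\Lambda_i Cf,\Lambda_i C'f\rangle\le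 B\|f\|^2$ for all $f\in\mathcal{H}$. *)

theory Defs
  imports "HOL-Analysis.Analysis"
begin

text \<open>HOL-Analysis only provides real inner product spaces; the paper works with
(complex) Hilbert spaces, so we introduce complex scalar multiplication and a
complex inner product (linear in the first argument, conjugate-linear in the second).\<close>

class complex_vector = real_vector +
  fixes scaleC :: "complex \<Rightarrow> 'a \<Rightarrow> 'a" (infixr "*\<^sub>C" 75)
  assumes scaleC_add_right: "a *\<^sub>C (x + y) = a *\<^sub>C x + a *\<^sub>C y"
    and scaleC_add_left: "(a + b) *\<^sub>C x = a *\<^sub>C x + b *\<^sub>C x"
    and scaleC_scaleC: "a *\<^sub>C (b *\<^sub>C x) = (a * b) *\<^sub>C x"
    and scaleC_one: "1 *\<^sub>C x = x"
    and scaleR_scaleC: "scaleR r x = complex_of_real r *\<^sub>C x"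

class complex_inner = complex_vector + real_normed_vector +
  fixes cinner :: "'a \<Rightarrow> 'a \<Rightarrow> complex"
  assumes cinner_commute: "cinner x y = cnj (cinner y x)"
    and cinner_add_left: "cinner (x + y) z = cinner x z + cinner y z"
    and cinner_scaleC_left: "cinner (a *\<^sub>C x) y = a * cinner x y"
    and cinner_ge_zero: "0 \<le> Re (cinner x x)"
    and cinner_eq_zero_iff: "cinner x x = 0 \<longleftrightarrow> x = 0"
    and norm_eq_sqrt_cinner: "norm x = sqrt (Re (cinner x x))"

definition bounded_clinear :: "('a::complex_inner \<Rightarrow> 'b::complex_inner) \<Rightarrow> bool" where
  "bounded_clinear T \<longleftrightarrow>
     (\<forall>x y. T (x + y) = T x + T y) \<and> (\<forall>a x. T (a *\<^sub>C x) = a *\<^sub>C T x) \<and>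
     (\<exists>K. \<forall>x. norm (T x) \<le> norm x * K)"

definition cadjoint :: "('a::complex_inner \<Rightarrow> 'b::complex_inner) \<Rightarrow> 'b \<Rightarrow> 'a" where
  "cadjoint T = (THE T'. \<forall>x y. cinner (T x) y = cinner x (T' y))"

definition GLplus :: "('a::complex_inner \<Rightarrow> 'a) \<Rightarrow> bool" where
  "GLplus T \<longleftrightarrow> bounded_clinear T \<and>
     (\<forall>f. f \<noteq> 0 \<longrightarrow> Im (cinner (T f) f) = 0 \<and> Re (cinner (T f) f) > 0) \<and>
     (\<exists>D. bounded_clinear D \<and> (\<forall>f. D (T f) = f) \<and> (\<forall>f. T (D f) = f))"

text \<open>g-Bessel sequences and g-frames, indexed by I \<subseteq> \<int>.  All H_i are realised
inside one common Hilbert space 'b.\<close>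
definition g_Bessel :: "int set \<Rightarrow> (int \<Rightarrow> 'a::complex_inner \<Rightarrow> 'b::complex_inner) \<Rightarrow> bool" where
  "g_Bessel I \<Lambda> \<longleftrightarrow> (\<forall>i\<in>I. bounded_clinear (\<Lambda> i)) \<and>
     (\<exists>B. \<forall>f. (\<lambda>i. (norm (\<Lambda> i f))\<^sup>2) summable_on I \<and>
              (\<Sum>\<^sub>\<infinity>i\<in>I. (norm (\<Lambda> i f))\<^sup>2) \<le> B * (norm f)\<^sup>2)"

definition g_frame :: "int set \<Rightarrow> (int \<Rightarrow> 'a::complex_inner \<Rightarrow> 'b::complex_inner) \<Rightarrow> bool" where
  "g_frame I \<Lambda> \<longleftrightarrow> (\<forall>i\<in>I. bounded_clinear (\<Lambda> i)) \<and>
     (\<exists>A B. 0 < A \<and> A \<le> B \<and>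
        (\<forall>f. (\<lambda>i. (norm (\<Lambda> i f))\<^sup>2) summable_on I \<and>
             A * (norm f)\<^sup>2 \<le> (\<Sum>\<^sub>\<infinity>i\<in>I. (norm (\<Lambda> i f))\<^sup>2) \<and>
             (\<Sum>\<^sub>\<infinity>i\<in>I. (norm (\<Lambda> i f))\<^sup>2) \<le> B * (norm f)\<^sup>2))"

definition g_frame_op :: "int set \<Rightarrow> (int \<Rightarrow> 'a::complex_inner \<Rightarrow> 'b::complex_inner) \<Rightarrow> 'a \<Rightarrow> 'a" where
  "g_frame_op I \<Lambda> f = (\<Sum>\<^sub>\<infinity>i\<in>I. cadjoint (\<Lambda> i) (\<Lambda> i f))"

definition controlled_g_frame ::
  "int set \<Rightarrow> (int \<Rightarrow> 'a::complex_inner \<Rightarrow> 'b::complex_inner) \<Rightarrow> ('a \<Rightarrow> 'a) \<Rightarrow> ('a \<Rightarrow> 'a) \<Rightarrow> bool" where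
  "controlled_g_frame I \<Lambda> C C' \<longleftrightarrow> g_Bessel I \<Lambda> \<and>
     (\<exists>A B. 0 < A \<and>
        (\<forall>f. (\<lambda>i. cinner (\<Lambda> i (C f)) (\<Lambda> i (C' f))) summable_on I \<and>
             Im (\<Sum>\<^sub>\<infinity>i\<in>I. cinner (\<Lambda> i (C f)) (\<Lambda> i (C' f))) = 0 \<and>
             A * (norm f)\<^sup>2 \<le> Re (\<Sum>\<^sub>\<infinity>i\<in>I. cinner (\<Lambda> i (C f)) (\<Lambda> i (C' f))) \<and>
             Re (\<Sum>\<^sub>\<infinity>i\<in>I. cinner (\<Lambda> i (C f)) (\<Lambda> i (C' f))) \<le> B * (norm f)\<^sup>2))"

end

theory Submission
  imports Defs
begin

lemma scaleC_zero_left[simp]: "(0::complex) *\<^sub>C (x::'a::complex_vector) = 0"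
  using scaleR_scaleC[of 0 x] by simp

lemma scaleC_minus1: "(-1::complex) *\<^sub>C (x::'a::complex_vector) = - x"
  using scaleR_scaleC[of "-1" x] by simp

lemma scaleC_of_real: "complex_of_real r *\<^sub>C (x::'a::complex_vector) = r *\<^sub>R x"
  by (simp add: scaleR_scaleC)

lemma cinner_add_right: "cinner x (y + z) = cinner x y + cinner x (z::'a::complex_inner)"
  unfolding cinner_commute[of x "y+z"] cinner_commute[of x y] cinner_commute[of x z] cinner_add_left by simp

lemma cinner_scaleC_right: "cinner x (a *\<^sub>C y) = cnj a * cinner x (y::'a::complex_inner)"
  unfolding cinner_commute[of x "a *\<^sub>C y"] cinner_commute[of x y] cinner_scaleC_left by simp

lemma cinner_zero_left[simp]: "cinner 0 (x::'a::complex_inner) = 0"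
  using cinner_add_left[of 0 0 x] by simp

lemma cinner_zero_right[simp]: "cinner x (0::'a::complex_inner) = 0"
  using cinner_commute[of x 0] by simp

lemma cinner_minus_left: "cinner (- x) (y::'a::complex_inner) = - cinner x y"
  using cinner_add_left[of x "-x" y] by (simp add: eq_neg_iff_add_eq_0 add.commute)

lemma cinner_minus_right: "cinner x (- y::'a::complex_inner) = - cinner x y"
  using cinner_add_right[of x y "-y"] by (simp add: eq_neg_iff_add_eq_0 add.commute)

lemma cinner_diff_left: "cinner (x - y) (z::'a::complex_inner) = cinner x z - cinner y z"
  by (simp only: diff_conv_add_uminus cinner_add_left cinner_minus_left)

lemma cinner_diff_right: "cinner x (y - z::'a::complex_inner) = cinner x y - cinner x z"
  by (simp only: diff_conv_add_uminus cinner_add_right cinner_minus_right)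

lemma cinner_scaleR_left: "cinner (r *\<^sub>R x) (y::'a::complex_inner) = complex_of_real r * cinner x y"
  by (subst scaleR_scaleC) (rule cinner_scaleC_left)

lemma cinner_scaleR_right: "cinner x (r *\<^sub>R y::'a::complex_inner) = complex_of_real r * cinner x y"
  by (subst scaleR_scaleC) (simp only: cinner_scaleC_right complex_cnj_complex_of_real)

lemma cinner_self_Im: "Im (cinner x (x::'a::complex_inner)) = 0"
proof -
  have "Im (cinner x x) = Im (cnj (cinner x x))" using cinner_commute[of x x] by simp
  then show ?thesis by simp
qed

lemma cinner_self_norm: "cinner x (x::'a::complex_inner) = complex_of_real ((norm x)\<^sup>2)"
proof -
  have "(norm x)\<^sup>2 = Re (cinner x x)" using norm_eq_sqrt_cinner[of x] cinner_ge_zero[of x] by simp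
  then show ?thesis using cinner_self_Im[of x] by (simp add: complex_eq_iff)
qed

lemma norm_sq_cinner: "(norm x)\<^sup>2 = Re (cinner x (x::'a::complex_inner))"
  by (simp add: cinner_self_norm)

lemma quad_discr:
  fixes a b c :: real
  assumes "\<And>t. 0 \<le> a * t\<^sup>2 - 2 * b * t + c" "0 \<le> a"
  shows "b\<^sup>2 \<le> a * c"
proof (cases "a = 0")
  case True
  have "b = 0"
  proof (rule ccontr)
    assume "b \<noteq> 0"
    have "0 \<le> - 2 * b * ((c + 1) / (2 * b)) + c" using assms(1)[of "(c+1)/(2*b)"] True by simp
    also have "\<dots> = -1" using \<open>b \<noteq> 0\<close> by (simp add: field_simps)
    finally show False by simp
  qed
  then show ?thesis using True by simp
next
  case False
  then have a: "a > 0" using assms(2) by simp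
  have "0 \<le> a * (b/a)\<^sup>2 - 2 * b * (b/a) + c" by (rule assms(1))
  also have "\<dots> = c - b\<^sup>2 / a" using a by (simp add: field_simps power2_eq_square)
  finally show ?thesis using a by (simp add: field_simps)
qed

locale hform =
  fixes B :: "'a::complex_vector \<Rightarrow> 'a \<Rightarrow> complex"
  assumes add_left: "B (x + y) z = B x z + B y z"
    and scale_left: "B (a *\<^sub>C x) y = a * B x y"
    and herm: "B x y = cnj (B y x)"
    and pos: "0 \<le> Re (B x x)"
begin

lemma add_right: "B x (y + z) = B x y + B x z"
  by (metis add_left herm complex_cnj_add)

lemma scale_right: "B x (a *\<^sub>C y) = cnj a * B x y"
  by (metis herm scale_left complex_cnj_cnj complex_cnj_mult)

lemma self_real: "B x x = complex_of_real (Re (B x x))"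
proof -
  have "Im (B x x) = Im (cnj (B x x))" using herm[of x x] by simp
  then show ?thesis by (simp add: complex_eq_iff)
qed

lemma expand: "B (x + c *\<^sub>C y) (x + c *\<^sub>C y) = B x x + c * B y x + cnj c * B x y + (c * cnj c) * B y y"
proof -
  have "B (x + c *\<^sub>C y) (x + c *\<^sub>C y) = B x x + c * B y x + cnj c * (B x y + c * B y y)"
    by (simp only: add_left add_right scale_left scale_right)
  then show ?thesis by (simp add: algebra_simps del: complex_cnj_mult)
qed

lemma CS: "(cmod (B x y))\<^sup>2 \<le> Re (B x x) * Re (B y y)"
proof (cases "B x y = 0")
  case True then show ?thesis using pos[of x] pos[of y] by simp
next
  case False
  define r where "r = cmod (B x y)"
  have r: "r > 0" using False by (simp add: r_def)
  define u where "u = B x y / complex_of_real r"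
  have u1: "cmod u = 1" using r by (simp add: u_def norm_divide r_def)
  have uu: "u * cnj u = 1" using u1 by (metis complex_norm_square of_real_1 one_power2)
  have sq: "cnj (B x y) * B x y = complex_of_real (r\<^sup>2)"
    by (metis complex_norm_square mult.commute r_def)
  have uB: "cnj u * B x y = complex_of_real r"
  proof -
    have "cnj u * B x y = (cnj (B x y) * B x y) / complex_of_real r" by (simp add: u_def)
    also have "\<dots> = complex_of_real (r\<^sup>2 / r)" by (simp only: sq of_real_divide)
    also have "r\<^sup>2 / r = r" using r by (simp add: power2_eq_square)
    finally show ?thesis .
  qed
  have "0 \<le> Re (B y y) * t\<^sup>2 - 2 * r * t + Re (B x x)" for t :: real
  proof -
    define c where "c = - (complex_of_real t * u)"
    have "B (x + c *\<^sub>C y) (x + c *\<^sub>C y) = B x x + c * B y x + cnj c * B x y + (c * cnj c) * B y y"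
      by (rule expand)
    also have "c * B y x = - complex_of_real (t * r)"
    proof -
      have "c * B y x = - complex_of_real t * cnj (cnj u * B x y)"
        unfolding c_def herm[of y x] complex_cnj_mult complex_cnj_cnj by (simp only: mult_minus_left mult.assoc)
      then show ?thesis by (simp only: uB complex_cnj_complex_of_real of_real_mult mult_minus_left)
    qed
    also have "cnj c * B x y = - complex_of_real (t * r)"
    proof -
      have "cnj c * B x y = - complex_of_real t * (cnj u * B x y)"
        by (simp add: c_def)
      then show ?thesis by (simp only: uB of_real_mult mult_minus_left)
    qed
    also have "c * cnj c = complex_of_real (t * t)"
    proof -
      have "c * cnj c = complex_of_real (t * t) * (u * cnj u)"
        by (simp add: c_def)
      then show ?thesis by (simp only: uu mult_1_right)
    qed
    finally have "B (x + c *\<^sub>C y) (x + c *\<^sub>C y) = B x x - complex_of_real (t * r) - complex_of_real (t * r) + complex_of_real (t * t) * B y y"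
      by simp
    then have "Re (B (x + c *\<^sub>C y) (x + c *\<^sub>C y)) = Re (B x x) - 2 * t * r + t * t * Re (B y y)"
      by (simp del: of_real_mult)
    then show ?thesis using pos[of "x + c *\<^sub>C y"] by (simp add: algebra_simps power2_eq_square)
  qed
  from quad_discr[OF this pos] show ?thesis by (simp add: r_def mult.commute)
qed

end

lemma hform_cinner: "hform (cinner :: 'a::complex_inner \<Rightarrow> _)"
  apply unfold_locales
  apply (rule cinner_add_left)
  apply (rule cinner_scaleC_left)
  apply (rule cinner_commute)
  by (rule cinner_ge_zero)

lemma cinner_CS: "cmod (cinner x (y::'a::complex_inner)) \<le> norm x * norm y"
proof -
  have "(cmod (cinner x y))\<^sup>2 \<le> (norm x * norm y)\<^sup>2"
    using hform.CS[OF hform_cinner, of x y] unfolding norm_sq_cinner[symmetric] power_mult_distrib .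
  then show ?thesis by (rule power2_le_imp_le) simp
qed

lemma bounded_clinear_linear:
  assumes "bounded_clinear T" shows "bounded_linear T"
proof -
  from assms obtain K where add: "\<And>x y. T (x + y) = T x + T y" and sc: "\<And>a x. T (a *\<^sub>C x) = a *\<^sub>C T x"
    and b: "\<And>x. norm (T x) \<le> norm x * K" unfolding bounded_clinear_def by blast
  show ?thesis
  proof (rule bounded_linear_intro[of T K])
    show "T (r *\<^sub>R x) = r *\<^sub>R T x" for r x by (simp add: scaleR_scaleC sc)
  qed (use add b in auto)
qed

lemma bounded_clinear_add: "bounded_clinear T \<Longrightarrow> T (x + y) = T x + T y"
  unfolding bounded_clinear_def by blast
lemma bounded_clinear_scaleC: "bounded_clinear T \<Longrightarrow> T (a *\<^sub>C x) = a *\<^sub>C T x"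
  unfolding bounded_clinear_def by blast
lemma bounded_clinear_bound: "bounded_clinear T \<Longrightarrow> \<exists>K>0. \<forall>x. norm (T x) \<le> norm x * K"
proof -
  assume "bounded_clinear T"
  then obtain K where K: "\<And>x. norm (T x) \<le> norm x * K" unfolding bounded_clinear_def by blast
  have "norm (T x) \<le> norm x * (max K 1)" for x
  proof -
    have "norm x * K \<le> norm x * max K 1" by (rule mult_left_mono) auto
    then show ?thesis using K[of x] by linarith
  qed
  then show ?thesis by (intro exI[of _ "max K 1"]) auto
qed
lemma bounded_clinear_diff: "bounded_clinear T \<Longrightarrow> T (x - y) = T x - T y"
  using linear_diff[OF bounded_linear.linear[OF bounded_clinear_linear]] by blast
lemma bounded_clinear_zero: "bounded_clinear T \<Longrightarrow> T 0 = 0"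
  using linear_0[OF bounded_linear.linear[OF bounded_clinear_linear]] by blast

lemma bounded_clinear_comp:
  assumes "bounded_clinear S" "bounded_clinear T" shows "bounded_clinear (\<lambda>x. S (T x))"
proof -
  obtain K1 where K1: "K1 > 0" "\<And>x. norm (S x) \<le> norm x * K1" using bounded_clinear_bound[OF assms(1)] by blast
  obtain K2 where K2: "K2 > 0" "\<And>x. norm (T x) \<le> norm x * K2" using bounded_clinear_bound[OF assms(2)] by blast
  have "norm (S (T x)) \<le> norm x * (K2 * K1)" for x
  proof -
    have "norm (S (T x)) \<le> norm (T x) * K1" by (rule K1)
    also have "\<dots> \<le> norm x * K2 * K1" using K2(2)[of x] K1(1) by (simp add: mult_right_mono)
    finally show ?thesis by simp
  qed
  then show ?thesis using assms unfolding bounded_clinear_def by auto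
qed

lemma bounded_bilinear_cinner: "bounded_bilinear (cinner :: 'a::complex_inner \<Rightarrow> 'a \<Rightarrow> complex)"
proof
  show "cinner (a + a') b = cinner a b + cinner a' b" for a a' b :: 'a by (rule cinner_add_left)
  show "cinner a (b + b') = cinner a b + cinner a b'" for a b b' :: 'a by (rule cinner_add_right)
  show "cinner (r *\<^sub>R a) b = r *\<^sub>R cinner a b" for r :: real and a b :: 'a
    by (simp add: cinner_scaleR_left scaleR_conv_of_real)
  show "cinner a (r *\<^sub>R b) = r *\<^sub>R cinner a b" for r :: real and a b :: 'a
    by (simp add: cinner_scaleR_right scaleR_conv_of_real)
  show "\<exists>K. \<forall>a b::'a. norm (cinner a b) \<le> norm a * norm b * K"
    by (rule exI[of _ 1]) (simp add: cinner_CS)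
qed

lemma cinner_ext: "(\<And>g. cinner a g = cinner b (g::'a::complex_inner)) \<Longrightarrow> a = b"
proof -
  assume h: "\<And>g. cinner a g = cinner b g"
  have "cinner (a - b) (a - b) = cinner a (a - b) - cinner b (a - b)" by (rule cinner_diff_left)
  also have "\<dots> = 0" unfolding h[of "a - b"] by (rule diff_self)
  finally have "a - b = 0" using cinner_eq_zero_iff[of "a - b"] by blast
  then show "a = b" by (rule right_minus_eq[THEN iffD1])
qed

lemma cinner_ext_right: "(\<And>g. cinner g a = cinner g (b::'a::complex_inner)) \<Longrightarrow> a = b"
proof -
  assume h: "\<And>g. cinner g a = cinner g b"
  show "a = b"
  proof (rule cinner_ext)
    fix g show "cinner a g = cinner b g"
      using cinner_commute[of a g] cinner_commute[of b g] h[of g] by simp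
  qed
qed

lemma parallelogram:
  "(norm (x + y))\<^sup>2 + (norm (x - y))\<^sup>2 = 2 * (norm x)\<^sup>2 + 2 * (norm (y::'a::complex_inner))\<^sup>2"
proof -
  have a: "cinner (x + y) (x + y) = cinner x x + cinner x y + (cinner y x + cinner y y)"
    by (simp only: cinner_add_left cinner_add_right add.assoc add.left_commute)
  have b: "cinner (x - y) (x - y) = cinner x x - cinner x y - (cinner y x - cinner y y)"
    by (simp add: cinner_diff_left cinner_diff_right algebra_simps)
  show ?thesis unfolding norm_sq_cinner a b by simp
qed

lemma norm_sq_expand:
  "(norm (x + c *\<^sub>C y))\<^sup>2 = Re (cinner x x + c * cinner y x + cnj c * cinner x y + (c * cnj c) * cinner y (y::'a::complex_inner))"
  unfolding norm_sq_cinner by (rule arg_cong[where f=Re], rule hform.expand[OF hform_cinner])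

lemma norm_scaleC: "norm (c *\<^sub>C (x::'a::complex_inner)) = cmod c * norm x"
proof -
  have e: "cinner (c *\<^sub>C x) (c *\<^sub>C x) = (c * cnj c) * cinner x x"
    by (simp only: cinner_scaleC_left cinner_scaleC_right mult.assoc mult.left_commute)
  have "complex_of_real ((norm (c *\<^sub>C x))\<^sup>2) = complex_of_real ((cmod c * norm x)\<^sup>2)"
  proof -
    have "complex_of_real ((norm (c *\<^sub>C x))\<^sup>2) = (c * cnj c) * complex_of_real ((norm x)\<^sup>2)"
      using e by (simp only: cinner_self_norm)
    also have "c * cnj c = complex_of_real ((cmod c)\<^sup>2)" by (rule complex_norm_square[symmetric])
    finally show ?thesis by (simp only: of_real_mult[symmetric] power_mult_distrib)
  qed
  then have "(norm (c *\<^sub>C x))\<^sup>2 = (cmod c * norm x)\<^sup>2" using of_real_eq_iff by blast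
  then show ?thesis by (simp add: power2_eq_iff_nonneg)
qed

lemma riesz:
  fixes \<phi> :: "'a::{complex_inner,complete_space} \<Rightarrow> complex"
  assumes add: "\<And>x y. \<phi> (x + y) = \<phi> x + \<phi> y"
    and sc: "\<And>c x. \<phi> (c *\<^sub>C x) = c * \<phi> x"
    and bd: "\<And>x. cmod (\<phi> x) \<le> norm x * K"
  shows "\<exists>z. \<forall>x. \<phi> x = cinner x z"
proof (cases "\<forall>x. \<phi> x = 0")
  case True then show ?thesis by (intro exI[of _ 0]) simp
next
  case False
  have lin: "bounded_linear \<phi>"
  proof (rule bounded_linear_intro[of \<phi> K])
    show "\<phi> (r *\<^sub>R x) = r *\<^sub>R \<phi> x" for r x
      unfolding scaleR_scaleC sc by (simp add: scaleR_conv_of_real)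
  qed (use add bd in auto)
  from False obtain x0 where x0: "\<phi> x0 \<noteq> 0" by blast
  define M where "M = {x. \<phi> x = 1}"
  have x1M: "(1 / \<phi> x0) *\<^sub>C x0 \<in> M" using x0 by (simp add: M_def sc)
  define d where "d = Inf (norm ` M)"
  have ne: "norm ` M \<noteq> {}" using x1M by blast
  have bdd: "bdd_below (norm ` M)" by (rule bdd_belowI[of _ 0]) auto
  have dle: "d \<le> norm y" if "\<phi> y = 1" for y
    unfolding d_def by (rule cInf_lower) (use that bdd in \<open>auto simp: M_def\<close>)
  have d0: "0 \<le> d" unfolding d_def by (rule cInf_greatest[OF ne]) auto
  have "\<exists>x. \<phi> x = 1 \<and> norm x < d + inverse (real (Suc n))" for n
  proof -
    have "Inf (norm ` M) < d + inverse (real (Suc n))" unfolding d_def by simp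
    from cInf_lessD[OF ne this] show ?thesis by (auto simp: M_def)
  qed
  then obtain xs where xs1: "\<And>n. \<phi> (xs n) = 1" and xsn: "\<And>n. norm (xs n) < d + inverse (real (Suc n))"
    by metis
  define e where "e n = inverse (real (Suc n))" for n
  have e0: "0 < e n" "e n \<le> 1" for n by (auto simp: e_def inverse_le_1_iff)
  have emono: "e n \<le> e m" if "m \<le> n" for m n
    using that by (auto simp: e_def intro!: le_imp_inverse_le)
  have sqb: "(norm (xs n))\<^sup>2 \<le> d\<^sup>2 + (2 * d + 1) * e n" for n
  proof -
    have "norm (xs n) \<le> d + e n" using xsn[of n] by (simp add: e_def)
    then have "(norm (xs n))\<^sup>2 \<le> (d + e n)\<^sup>2" by (rule power_mono) simp
    also have "\<dots> = d\<^sup>2 + (2 * d + e n) * e n" by (simp add: power2_eq_square algebra_simps)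
    also have "\<dots> \<le> d\<^sup>2 + (2 * d + 1) * e n" using e0[of n] by (intro add_left_mono mult_right_mono) auto
    finally show ?thesis .
  qed
  have sumb: "2 * d \<le> norm (xs n + xs m)" for n m
  proof -
    have "\<phi> ((1/2) *\<^sub>C (xs n + xs m)) = 1" by (simp add: sc add xs1)
    then have "d \<le> norm ((1/2) *\<^sub>C (xs n + xs m))" by (rule dle)
    also have "\<dots> = norm (xs n + xs m) / 2" by (simp add: norm_scaleC)
    finally show ?thesis by simp
  qed
  have distb: "(dist (xs n) (xs m))\<^sup>2 \<le> 2 * (2 * d + 1) * (e n + e m)" for n m
  proof -
    have p: "(norm (xs n + xs m))\<^sup>2 + (norm (xs n - xs m))\<^sup>2 = 2 * (norm (xs n))\<^sup>2 + 2 * (norm (xs m))\<^sup>2"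
      by (rule parallelogram)
    have "(2 * d)\<^sup>2 \<le> (norm (xs n + xs m))\<^sup>2" using sumb[of n m] d0 by (intro power_mono) auto
    then have "(norm (xs n - xs m))\<^sup>2 \<le> 2 * (norm (xs n))\<^sup>2 + 2 * (norm (xs m))\<^sup>2 - 4 * d\<^sup>2"
      using p by (simp add: power2_eq_square)
    also have "\<dots> \<le> 2 * (d\<^sup>2 + (2 * d + 1) * e n) + 2 * (d\<^sup>2 + (2 * d + 1) * e m) - 4 * d\<^sup>2"
      using sqb[of n] sqb[of m] by (intro diff_right_mono add_mono mult_left_mono) auto
    also have "\<dots> = 2 * (2 * d + 1) * (e n + e m)" by (simp add: algebra_simps)
    finally show ?thesis by (simp add: dist_norm)
  qed
  have "Cauchy xs"
  proof (rule metric_CauchyI)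
    fix r :: real assume r: "0 < r"
    have "0 < r\<^sup>2 / (4 * (2 * d + 1))" using r d0 by simp
    from reals_Archimedean[OF this] obtain N where N: "inverse (real (Suc N)) < r\<^sup>2 / (4 * (2 * d + 1))" by blast
    have "dist (xs m) (xs n) < r" if "m \<ge> N" "n \<ge> N" for m n
    proof -
      have "(dist (xs m) (xs n))\<^sup>2 \<le> 2 * (2 * d + 1) * (e m + e n)" by (rule distb)
      also have "\<dots> \<le> 2 * (2 * d + 1) * (e N + e N)"
        using emono[OF that(1)] emono[OF that(2)] d0 by (intro mult_left_mono) auto
      also have "\<dots> = 4 * (2 * d + 1) * e N" by simp
      also have "\<dots> < 4 * (2 * d + 1) * (r\<^sup>2 / (4 * (2 * d + 1)))"
        using N d0 by (intro mult_strict_left_mono) (auto simp: e_def)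
      also have "\<dots> = r\<^sup>2" using d0 by simp
      finally show ?thesis using r by (simp add: power2_less_imp_less)
    qed
    then show "\<exists>N. \<forall>m\<ge>N. \<forall>n\<ge>N. dist (xs m) (xs n) < r" by blast
  qed
  then obtain u where u: "xs \<longlonglongrightarrow> u" using Cauchy_convergent convergent_def by blast
  have "(\<lambda>n. \<phi> (xs n)) \<longlonglongrightarrow> \<phi> u" by (rule bounded_linear.tendsto[OF lin u])
  then have "(\<lambda>n. 1) \<longlonglongrightarrow> \<phi> u" using xs1 by simp
  then have phiu: "\<phi> u = 1" using LIMSEQ_unique tendsto_const by metis
  have lim2: "(\<lambda>n. d + e n) \<longlonglongrightarrow> d"
    using tendsto_add[OF tendsto_const LIMSEQ_inverse_real_of_nat, of d] by (simp add: e_def)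
  have normu: "norm u \<le> d"
  proof (rule LIMSEQ_le[OF tendsto_norm[OF u] lim2])
    show "\<exists>N. \<forall>n\<ge>N. norm (xs n) \<le> d + e n" using xsn by (auto simp: e_def less_imp_le)
  qed
  have orth: "cinner u h = 0" if h: "\<phi> h = 0" for h
  proof -
    define a where "a = cinner u h"
    define A where "A = (cmod a)\<^sup>2"
    define s where "s = 1 / ((norm h)\<^sup>2 + 1)"
    have hp: "0 < (norm h)\<^sup>2 + 1" by (rule add_nonneg_pos) simp_all
    have s0: "0 < s" using hp by (simp add: s_def)
    have s1: "s * (norm h)\<^sup>2 < 1" using hp by (simp add: s_def field_simps)
    define c where "c = - (complex_of_real s * a)"
    have aa: "a * cnj a = complex_of_real A" unfolding A_def by (rule complex_norm_square[symmetric])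
    have "\<phi> (u + c *\<^sub>C h) = 1" by (simp add: add sc phiu h)
    then have "d \<le> norm (u + c *\<^sub>C h)" by (rule dle)
    then have "norm u \<le> norm (u + c *\<^sub>C h)" using normu by linarith
    then have le: "(norm u)\<^sup>2 \<le> (norm (u + c *\<^sub>C h))\<^sup>2" by (rule power_mono) simp
    have t1: "c * cinner h u = - complex_of_real (s * A)"
      unfolding c_def a_def[symmetric] cinner_commute[of h u] a_def[symmetric] using aa by simp
    have t2: "cnj c * cinner u h = - complex_of_real (s * A)"
      unfolding c_def a_def[symmetric] using aa by (simp add: mult.commute)
    have t3: "c * cnj c = complex_of_real (s * s * A)"
      unfolding c_def using aa by (simp add: mult.commute mult.left_commute)
    have "(norm (u + c *\<^sub>C h))\<^sup>2 = Re (cinner u u + c * cinner h u + cnj c * cinner u h + c * cnj c * cinner h h)"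
      by (rule norm_sq_expand)
    also have "\<dots> = (norm u)\<^sup>2 - 2 * s * A + s * s * A * (norm h)\<^sup>2"
      unfolding t1 t2 t3 cinner_self_norm by simp
    finally have eq: "(norm (u + c *\<^sub>C h))\<^sup>2 = (norm u)\<^sup>2 - 2 * s * A + s * s * A * (norm h)\<^sup>2" .
    have "0 \<le> - 2 * s * A + s * s * A * (norm h)\<^sup>2" using le eq by linarith
    then have "0 \<le> s * A * (s * (norm h)\<^sup>2 - 2)" by (simp add: algebra_simps)
    moreover have "s * (norm h)\<^sup>2 - 2 < 0" using s1 by simp
    moreover have "0 \<le> A" by (simp add: A_def)
    ultimately have "s * A \<le> 0" by (simp add: mult_le_0_iff zero_le_mult_iff)
    then have "A = 0" using s0 \<open>0 \<le> A\<close> by (simp add: mult_le_0_iff)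
    then show ?thesis by (simp add: A_def a_def)
  qed
  have u0: "u \<noteq> 0"
  proof
    assume "u = 0"
    then have "\<phi> u = \<phi> (0 *\<^sub>C u)" by simp
    also have "\<dots> = 0" by (simp only: sc mult_zero_left)
    finally show False using phiu by simp
  qed
  then have nu: "(norm u)\<^sup>2 > 0" by simp
  show ?thesis
  proof (intro exI allI)
    fix x
    have "\<phi> (x - \<phi> x *\<^sub>C u) = 0"
    proof -
      have "x = (x - \<phi> x *\<^sub>C u) + \<phi> x *\<^sub>C u" by simp
      then have "\<phi> x = \<phi> (x - \<phi> x *\<^sub>C u) + \<phi> x * \<phi> u" by (metis add sc)
      then show ?thesis using phiu by simp
    qed
    then have "cinner u (x - \<phi> x *\<^sub>C u) = 0" by (rule orth)
    then have "cinner u x = cnj (\<phi> x) * cinner u u"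
      by (simp add: cinner_diff_right cinner_scaleC_right)
    then have "cnj (cinner u x) = \<phi> x * complex_of_real ((norm u)\<^sup>2)"
      by (simp add: cinner_self_norm)
    then have ex: "cinner x u = \<phi> x * complex_of_real ((norm u)\<^sup>2)"
      using cinner_commute[of x u] by simp
    have "cinner x ((1 / (norm u)\<^sup>2) *\<^sub>R u) = complex_of_real (1 / (norm u)\<^sup>2) * cinner x u"
      by (rule cinner_scaleR_right)
    also have "\<dots> = \<phi> x" unfolding ex using nu by (simp add: field_simps)
    finally show "\<phi> x = cinner x ((1 / (norm u)\<^sup>2) *\<^sub>R u)" by simp
  qed
qed

lemma pow2_bounded:
  fixes q C :: real
  assumes q: "0 \<le> q" and b: "\<And>n. q ^ (2 ^ n) \<le> C"
  shows "q \<le> 1"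
proof (rule ccontr)
  assume "\<not> q \<le> 1"
  then have q1: "q - 1 > 0" by simp
  obtain n :: nat where n: "C / (q - 1) < real n" using reals_Archimedean2 by blast
  have "1 + real (2 ^ n) * (q - 1) \<le> (1 + (q - 1)) ^ (2 ^ n)"
    using Bernoulli_inequality[of "q - 1" "2 ^ n"] q1 by simp
  then have bb: "1 + real (2 ^ n) * (q - 1) \<le> q ^ (2 ^ n)" by simp
  have "real n \<le> real (2 ^ n)" using less_exp[of n] by linarith
  then have "real n * (q - 1) \<le> real (2 ^ n) * (q - 1)" using q1 by (intro mult_right_mono) auto
  moreover have "C < real n * (q - 1)" using n q1 by (simp add: pos_divide_less_eq)
  ultimately show False using bb b[of n] by linarith
qed

lemma numrad:
  fixes L :: "'a::complex_inner \<Rightarrow> 'a"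
  assumes add: "\<And>x y. L (x + y) = L x + L y"
    and sc: "\<And>r x. L (r *\<^sub>R x) = r *\<^sub>R L x"
    and herm: "\<And>x y. cinner (L x) y = cinner x (L y)"
    and lo: "\<And>y. 0 \<le> Re (cinner (L y) y)"
    and up: "\<And>y. Re (cinner (L y) y) \<le> k * (norm y)\<^sup>2"
  shows "norm (L x) \<le> k * norm x"
proof (cases "L x = 0 \<or> x = 0")
  case True
  show ?thesis
  proof (cases "x = 0")
    case True
    have L0: "L 0 = 0" using sc[of 0 0] by simp
    show ?thesis using True L0 by simp
  next
    case False
    then have Lx: "L x = 0" using \<open>L x = 0 \<or> x = 0\<close> by blast
    have "0 \<le> k * (norm x)\<^sup>2" using up[of x] lo[of x] by linarith
    then have "0 \<le> k" using False by (simp add: zero_le_mult_iff)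
    then show ?thesis using Lx by simp
  qed
next
  case False
  then have Lx: "L x \<noteq> 0" and x0: "x \<noteq> 0" by auto
  have "0 \<le> k * (norm x)\<^sup>2" using up[of x] lo[of x] by linarith
  then have k0: "0 \<le> k" using x0 by (simp add: zero_le_mult_iff)
  define r where "r = norm x / norm (L x)"
  have r0: "r > 0" using Lx x0 by (simp add: r_def)
  define y where "y = r *\<^sub>R L x"
  have ny: "norm y = norm x" using Lx by (simp add: y_def r_def)
  have Lneg: "L (- z) = - L z" for z using sc[of "-1" z] by simp
  have Ldiff: "L (x - y) = L x - L y" using add[of x "- y"] Lneg[of y] by simp
  have e1: "cinner (L (x + y)) (x + y) = cinner (L x) x + cinner (L x) y + cinner (L y) x + cinner (L y) y"
    unfolding add cinner_add_left cinner_add_right by (simp only: add.assoc add.left_commute)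
  have e2: "cinner (L (x - y)) (x - y) = cinner (L x) x - cinner (L x) y - cinner (L y) x + cinner (L y) y"
    unfolding Ldiff cinner_diff_left cinner_diff_right by (simp add: algebra_simps)
  have hy: "cinner (L y) x = cnj (cinner (L x) y)"
    using herm[of y x] cinner_commute[of y "L x"] by simp
  have "4 * Re (cinner (L x) y) = Re (cinner (L (x + y)) (x + y)) - Re (cinner (L (x - y)) (x - y))"
    unfolding e1 e2 hy by simp
  also have "\<dots> \<le> k * (norm (x + y))\<^sup>2 + k * (norm (x - y))\<^sup>2"
  proof -
    have "0 \<le> k * (norm (x - y))\<^sup>2" using k0 by simp
    then show ?thesis using up[of "x + y"] lo[of "x - y"] by linarith
  qed
  also have "\<dots> = k * (2 * (norm x)\<^sup>2 + 2 * (norm y)\<^sup>2)"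
    using parallelogram[of x y] by (simp only: distrib_left[symmetric])
  also have "\<dots> = 4 * k * (norm x)\<^sup>2" unfolding ny by simp
  finally have 1: "Re (cinner (L x) y) \<le> k * (norm x)\<^sup>2" by simp
  have "cinner (L x) y = complex_of_real r * cinner (L x) (L x)"
    unfolding y_def by (rule cinner_scaleR_right)
  then have "Re (cinner (L x) y) = r * (norm (L x))\<^sup>2" by (simp add: norm_sq_cinner)
  also have "\<dots> = norm x * norm (L x)" using Lx by (simp add: r_def power2_eq_square)
  finally have "norm x * norm (L x) \<le> norm x * (k * norm x)" using 1 by (simp add: power2_eq_square mult_ac)
  then show ?thesis using x0 by simp
qed

lemma scaleR_scaleC_commute: "r *\<^sub>R (c *\<^sub>C (x::'a::complex_vector)) = c *\<^sub>C (r *\<^sub>R x)"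
  by (simp only: scaleR_scaleC scaleC_scaleC mult.commute)

lemma posprod:
  fixes P T :: "'a::complex_inner \<Rightarrow> 'a"
  assumes Padd: "\<And>x y. P (x + y) = P x + P y" and Psc: "\<And>c x. P (c *\<^sub>C x) = c *\<^sub>C P x"
    and Pherm: "\<And>x y. cinner (P x) y = cinner x (P y)"
    and Plow: "\<And>x. m * (norm x)\<^sup>2 \<le> Re (cinner (P x) x)" and m: "m > 0"
    and Pup: "\<And>x. Re (cinner (P x) x) \<le> M * (norm x)\<^sup>2"
    and T: "bounded_clinear T" and Therm: "\<And>x y. cinner (T x) y = cinner x (T y)"
    and Tlow: "\<And>x. t * (norm x)\<^sup>2 \<le> Re (cinner (T x) x)" and t: "t > 0"
    and comm: "\<And>x. P (T x) = T (P x)"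
  shows "t * m * (norm x)\<^sup>2 \<le> Re (cinner (P (T x)) x)"
proof -
  obtain KT where KT: "KT > 0" "\<And>x. norm (T x) \<le> norm x * KT" using bounded_clinear_bound[OF T] by blast
  define N where "N = t + KT"
  have N0: "N > 0" using t KT by (simp add: N_def)
  define \<kappa> where "\<kappa> = KT / N"
  have \<kappa>0: "0 < \<kappa>" using KT N0 by (simp add: \<kappa>_def)
  have \<kappa>1: "1 - \<kappa> = t / N" using N0 by (simp add: \<kappa>_def N_def field_simps)
  define K where "K x = x - (1 / N) *\<^sub>R T x" for x
  define Bp where "Bp x y = cinner (P x) y" for x y
  define Q where "Q x = Re (Bp x x)" for x
  have hf: "hform Bp"
  proof
    show "Bp (x + y) z = Bp x z + Bp y z" for x y z unfolding Bp_def Padd by (rule cinner_add_left)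
    show "Bp (c *\<^sub>C x) y = c * Bp x y" for c x y unfolding Bp_def Psc by (rule cinner_scaleC_left)
    show "Bp x y = cnj (Bp y x)" for x y unfolding Bp_def Pherm[of x y] by (rule cinner_commute)
    show "0 \<le> Re (Bp x x)" for x
    proof -
      have "0 \<le> m * (norm x)\<^sup>2" using m by simp
      then show ?thesis using Plow[of x] by (simp add: Bp_def)
    qed
  qed
  have Tlin: "bounded_linear T" by (rule bounded_clinear_linear[OF T])
  have Plin: "linear P"
  proof (rule linearI)
    show "P (x + y) = P x + P y" for x y by (rule Padd)
    show "P (r *\<^sub>R x) = r *\<^sub>R P x" for r x by (simp only: scaleR_scaleC Psc)
  qed
  have Kadd: "K (x + y) = K x + K y" for x y
    unfolding K_def using linear_add[OF bounded_linear.linear[OF Tlin]] by (simp add: scaleR_add_right algebra_simps)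
  have Ksc: "K (r *\<^sub>R x) = r *\<^sub>R K x" for r x
    unfolding K_def using linear_scale[OF bounded_linear.linear[OF Tlin]] by (simp add: scaleR_diff_right)
  have Kherm: "cinner (K x) y = cinner x (K y)" for x y
    unfolding K_def cinner_diff_left cinner_diff_right cinner_scaleR_left cinner_scaleR_right Therm ..
  have KP: "K (P x) = P (K x)" for x
    unfolding K_def linear_diff[OF Plin] linear_scale[OF Plin] comm ..
  have Klo: "0 \<le> Re (cinner (K y) y)" and Kup: "Re (cinner (K y) y) \<le> \<kappa> * (norm y)\<^sup>2" for y
  proof -
    have e: "Re (cinner (K y) y) = (norm y)\<^sup>2 - (1 / N) * Re (cinner (T y) y)"
      unfolding K_def cinner_diff_left cinner_scaleR_left by (simp add: norm_sq_cinner)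
    have "Re (cinner (T y) y) \<le> cmod (cinner (T y) y)" by (rule complex_Re_le_cmod)
    also have "\<dots> \<le> norm (T y) * norm y" by (rule cinner_CS)
    also have "\<dots> \<le> norm y * KT * norm y" using KT(2)[of y] by (simp add: mult_right_mono)
    finally have a: "Re (cinner (T y) y) \<le> KT * (norm y)\<^sup>2" by (simp add: power2_eq_square mult_ac)
    have "KT * (norm y)\<^sup>2 \<le> N * (norm y)\<^sup>2" using t by (simp add: N_def mult_right_mono)
    then have "(1 / N) * Re (cinner (T y) y) \<le> (norm y)\<^sup>2" using a N0 by (simp add: field_simps)
    then show "0 \<le> Re (cinner (K y) y)" using e by simp
    have "t * (norm y)\<^sup>2 \<le> Re (cinner (T y) y)" by (rule Tlow)
    then have "(t / N) * (norm y)\<^sup>2 \<le> (1 / N) * Re (cinner (T y) y)" using N0 by (simp add: field_simps)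
    then have "(norm y)\<^sup>2 - (1 / N) * Re (cinner (T y) y) \<le> (1 - t / N) * (norm y)\<^sup>2" by (simp add: algebra_simps)
    moreover have "1 - t / N = \<kappa>" using \<kappa>1 by simp
    ultimately show "Re (cinner (K y) y) \<le> \<kappa> * (norm y)\<^sup>2" using e by simp
  qed
  have Knorm: "norm (K y) \<le> \<kappa> * norm y" for y
    by (rule numrad[of K]) (auto intro: Kadd Ksc Kherm Klo Kup)
  have Kpow_norm: "norm ((K ^^ k) y) \<le> \<kappa> ^ k * norm y" for k y
  proof (induction k)
    case 0 then show ?case by simp
  next
    case (Suc k)
    have "norm ((K ^^ Suc k) y) = norm (K ((K ^^ k) y))" by simp
    also have "\<dots> \<le> \<kappa> * norm ((K ^^ k) y)" by (rule Knorm)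
    also have "\<dots> \<le> \<kappa> * (\<kappa> ^ k * norm y)" using Suc \<kappa>0 by (simp add: mult_left_mono)
    finally show ?case by simp
  qed
  have Kpow_herm: "cinner ((K ^^ k) x) y = cinner x ((K ^^ k) y)" for k x y
  proof (induction k arbitrary: x y)
    case 0 then show ?case by simp
  next
    case (Suc k)
    have "cinner ((K ^^ Suc k) x) y = cinner (K ((K ^^ k) x)) y" by simp
    also have "\<dots> = cinner ((K ^^ k) x) (K y)" by (rule Kherm)
    also have "\<dots> = cinner x ((K ^^ k) (K y))" by (rule Suc)
    also have "(K ^^ k) (K y) = (K ^^ Suc k) y" by (simp add: funpow_swap1)
    finally show ?case .
  qed
  have KPpow: "(K ^^ k) (P x) = P ((K ^^ k) x)" for k x
    by (induction k) (simp_all add: KP)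
  have Bpow: "Bp ((K ^^ k) x) y = Bp x ((K ^^ k) y)" for k x y
    unfolding Bp_def KPpow[symmetric] by (rule Kpow_herm)
  have Q0: "0 \<le> Q x" for x unfolding Q_def by (rule hform.pos[OF hf])
  have Qlow: "m * (norm x)\<^sup>2 \<le> Q x" for x unfolding Q_def Bp_def by (rule Plow)
  have Qup: "Q x \<le> M * (norm x)\<^sup>2" for x unfolding Q_def Bp_def by (rule Pup)
  have CSQ: "(Re (Bp x y))\<^sup>2 \<le> Q x * Q y" for x y
  proof -
    have "(Re (Bp x y))\<^sup>2 \<le> (cmod (Bp x y))\<^sup>2"
      using power_mono[OF abs_Re_le_cmod[of "Bp x y"] abs_ge_zero, of 2] by simp
    also have "\<dots> \<le> Q x * Q y" unfolding Q_def by (rule hform.CS[OF hf])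
    finally show ?thesis .
  qed
  have step: "(Q (L x))\<^sup>2 \<le> Q (L (L x)) * Q x" if L: "L = K ^^ j" for L j x
  proof -
    have "Q (L x) = Re (Bp (L (L x)) x)" unfolding Q_def L Bpow[of j "(K ^^ j) x" x] ..
    then show ?thesis using CSQ[of "L (L x)" x] by simp
  qed
  have claim: "(Q (K x)) ^ (2 ^ n) \<le> Q ((K ^^ (2 ^ n)) x) * (Q x) ^ (2 ^ n - 1)" for n x
  proof (induction n)
    case 0 then show ?case by simp
  next
    case (Suc n)
    define L where "L = K ^^ (2 ^ n)"
    have LL: "L (L x) = (K ^^ (2 ^ Suc n)) x" unfolding L_def by (simp add: funpow_add mult_2)
    have "(Q (K x)) ^ (2 ^ Suc n) = ((Q (K x)) ^ (2 ^ n))\<^sup>2" by (simp add: power_mult[symmetric] mult.commute)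
    also have "\<dots> \<le> (Q (L x) * (Q x) ^ (2 ^ n - 1))\<^sup>2"
      using Suc Q0 by (intro power_mono) (auto simp: L_def)
    also have "\<dots> = (Q (L x))\<^sup>2 * (Q x) ^ (2 * (2 ^ n - 1))" by (simp only: power_mult_distrib power_mult[symmetric] mult.commute[of "2 ^ n - 1" 2])
    also have "\<dots> \<le> (Q (L (L x)) * Q x) * (Q x) ^ (2 * (2 ^ n - 1))"
      using step[OF L_def, of x] Q0 by (intro mult_right_mono) auto
    also have "\<dots> = Q (L (L x)) * (Q x) ^ (2 * (2 ^ n - 1) + 1)" by (simp add: mult_ac)
    also have "2 * (2 ^ n - 1) + 1 = (2::nat) ^ Suc n - 1"
    proof -
      have h1: "(1::nat) \<le> 2 ^ n" by simp
      have h2: "\<And>p::nat. 1 \<le> p \<Longrightarrow> 2 * (p - 1) + 1 = 2 * p - 1" by arith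
      show ?thesis unfolding power_Suc by (rule h2[OF h1])
    qed
    finally show ?case unfolding LL .
  qed
  have QK: "Q (K x) \<le> \<kappa>\<^sup>2 * Q x" for x
  proof (cases "Q x = 0")
    case True
    then have "m * (norm x)\<^sup>2 \<le> 0" using Qlow[of x] by simp
    then have "x = 0" using m by (simp add: mult_le_0_iff)
    moreover have "K 0 = 0" using Ksc[of 0 0] by simp
    moreover have "Q 0 = 0" using Qup[of 0] Q0[of 0] by simp
    ultimately show ?thesis by simp
  next
    case False
    then have Qp: "Q x > 0" using Q0[of x] by simp
    define q where "q = Q (K x) / (\<kappa>\<^sup>2 * Q x)"
    have q0: "0 \<le> q" unfolding q_def using Q0 Qp by simp
    have qb: "q ^ (2 ^ n) \<le> M / m" for n
    proof -
      have "0 < M * (norm x)\<^sup>2" using Qup[of x] Qp by linarith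
      then have M0: "0 \<le> M" by (simp add: zero_less_mult_iff)
      define k where "k = (2::nat) ^ n"
      have k1: "1 \<le> k" by (simp add: k_def)
      have "Q ((K ^^ k) x) \<le> M * (norm ((K ^^ k) x))\<^sup>2" by (rule Qup)
      also have "\<dots> \<le> M * (\<kappa> ^ k * norm x)\<^sup>2"
      proof -
        have M0: "0 \<le> M" using M0 .
        show ?thesis using Kpow_norm[of k x] M0 by (intro mult_left_mono power_mono) auto
      qed
      also have "\<dots> = (M / m) * (\<kappa> ^ k) ^ 2 * (m * (norm x)\<^sup>2)"
        using m by (simp add: power_mult_distrib field_simps)
      also have "\<dots> \<le> (M / m) * (\<kappa> ^ k) ^ 2 * Q x"
      proof -
        have M0: "0 \<le> M" using M0 .
        show ?thesis using Qlow[of x] M0 m by (intro mult_left_mono) auto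
      qed
      finally have a: "Q ((K ^^ k) x) \<le> (M / m) * (\<kappa> ^ k) ^ 2 * Q x" .
      have "(Q (K x)) ^ k \<le> Q ((K ^^ k) x) * (Q x) ^ (k - 1)" unfolding k_def by (rule claim)
      also have "\<dots> \<le> (M / m) * (\<kappa> ^ k) ^ 2 * Q x * (Q x) ^ (k - 1)"
        using a Q0 by (intro mult_right_mono) auto
      also have "\<dots> = (M / m) * (\<kappa>\<^sup>2 * Q x) ^ k"
      proof -
        obtain j where j: "k = Suc j" using k1 by (cases k) auto
        have f1: "Q x * (Q x) ^ (k - 1) = (Q x) ^ k" unfolding j by simp
        have f2: "(\<kappa> ^ k) ^ 2 = (\<kappa>\<^sup>2) ^ k" by (simp only: power_mult[symmetric] mult.commute)
        show ?thesis unfolding power_mult_distrib f2 mult.assoc f1 ..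
      qed
      finally have "(Q (K x)) ^ k \<le> (M / m) * (\<kappa>\<^sup>2 * Q x) ^ k" .
      moreover have "q ^ k = (Q (K x)) ^ k / (\<kappa>\<^sup>2 * Q x) ^ k" by (simp add: q_def power_divide)
      moreover have "(\<kappa>\<^sup>2 * Q x) ^ k > 0" using Qp \<kappa>0 by simp
      ultimately show ?thesis by (simp add: k_def[symmetric] divide_le_eq)
    qed
    have "q \<le> 1" by (rule pow2_bounded[OF q0 qb])
    then show ?thesis using Qp \<kappa>0 by (simp add: q_def divide_le_eq)
  qed
  have ReK: "Re (Bp (K x) x) \<le> \<kappa> * Q x" for x
  proof -
    have "(Re (Bp (K x) x))\<^sup>2 \<le> Q (K x) * Q x" by (rule CSQ)
    also have "\<dots> \<le> \<kappa>\<^sup>2 * Q x * Q x" using QK[of x] Q0[of x] by (intro mult_right_mono) auto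
    also have "\<dots> = (\<kappa> * Q x)\<^sup>2" by (simp add: power2_eq_square)
    finally have "(Re (Bp (K x) x))\<^sup>2 \<le> (\<kappa> * Q x)\<^sup>2" .
    then have "\<bar>Re (Bp (K x) x)\<bar> \<le> \<bar>\<kappa> * Q x\<bar>" by (simp only: abs_le_square_iff)
    moreover have "\<bar>\<kappa> * Q x\<bar> = \<kappa> * Q x" using \<kappa>0 Q0[of x] by simp
    ultimately show ?thesis by linarith
  qed
  have Tx: "T x = N *\<^sub>R (x - K x)" unfolding K_def using N0 by simp
  have "Re (cinner (P (T x)) x) = Re (Bp (N *\<^sub>R (x - K x)) x)" unfolding Bp_def Tx ..
  also have "\<dots> = N * (Q x - Re (Bp (K x) x))"
    unfolding Bp_def Q_def linear_scale[OF Plin] linear_diff[OF Plin] cinner_scaleR_left cinner_diff_left by simp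
  also have "\<dots> \<ge> N * (Q x - \<kappa> * Q x)" using ReK[of x] N0 by (intro mult_left_mono) auto
  finally have "N * ((1 - \<kappa>) * Q x) \<le> Re (cinner (P (T x)) x)" by (simp add: algebra_simps)
  then have "t * Q x \<le> Re (cinner (P (T x)) x)" unfolding \<kappa>1 using N0 by simp
  moreover have "t * (m * (norm x)\<^sup>2) \<le> t * Q x" using Qlow[of x] t by (intro mult_left_mono) auto
  ultimately show ?thesis by (simp add: mult.assoc)
qed

lemma adjoint_exists:
  fixes T :: "'a::{complex_inner,complete_space} \<Rightarrow> 'b::complex_inner"
  assumes T: "bounded_clinear T"
  shows "\<exists>T'. \<forall>x y. cinner (T x) y = cinner x (T' y)"
proof -
  obtain K where K: "K > 0" "\<And>x. norm (T x) \<le> norm x * K" using bounded_clinear_bound[OF T] by blast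
  have "\<exists>z. \<forall>x. cinner (T x) y = cinner x z" for y
  proof (rule riesz[where K = "K * norm y"])
    show "cinner (T (x + x')) y = cinner (T x) y + cinner (T x') y" for x x'
      unfolding bounded_clinear_add[OF T] by (rule cinner_add_left)
    show "cinner (T (c *\<^sub>C x)) y = c * cinner (T x) y" for c x
      unfolding bounded_clinear_scaleC[OF T] by (rule cinner_scaleC_left)
    show "cmod (cinner (T x) y) \<le> norm x * (K * norm y)" for x
    proof -
      have "cmod (cinner (T x) y) \<le> norm (T x) * norm y" by (rule cinner_CS)
      also have "\<dots> \<le> norm x * K * norm y" using K(2)[of x] by (simp add: mult_right_mono)
      finally show ?thesis by (simp add: mult.assoc)
    qed
  qed
  then show ?thesis by metis
qed

lemma cadjoint_prop:
  fixes T :: "'a::{complex_inner,complete_space} \<Rightarrow> 'b::complex_inner"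
  assumes T: "bounded_clinear T"
  shows "cinner (T x) y = cinner x (cadjoint T y)"
proof -
  obtain T' where T': "\<forall>x y. cinner (T x) y = cinner x (T' y)" using adjoint_exists[OF T] by blast
  have uniq: "T2 = T'" if "\<forall>x y. cinner (T x) y = cinner x (T2 y)" for T2
  proof
    fix y show "T2 y = T' y"
      by (rule cinner_ext_right) (metis that T')
  qed
  have "cadjoint T = T'" unfolding cadjoint_def
    by (rule the_equality) (use T' uniq in blast)+
  then show ?thesis using T' by simp
qed

lemma cadjoint_prop2:
  fixes T :: "'a::{complex_inner,complete_space} \<Rightarrow> 'b::complex_inner"
  assumes T: "bounded_clinear T"
  shows "cinner (cadjoint T y) x = cinner y (T x)"
proof -
  have "cinner (cadjoint T y) x = cnj (cinner x (cadjoint T y))" by (rule cinner_commute)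
  also have "\<dots> = cnj (cinner (T x) y)" by (simp only: cadjoint_prop[OF T])
  also have "\<dots> = cinner y (T x)" by (rule cinner_commute[symmetric])
  finally show ?thesis .
qed

lemma summable_by_sq:
  fixes v :: "'i \<Rightarrow> 'a::{real_normed_vector,complete_space}" and w :: "'i \<Rightarrow> real"
  assumes w: "w summable_on A" and c: "0 \<le> c"
    and bnd: "\<And>G. finite G \<Longrightarrow> G \<subseteq> A \<Longrightarrow> (norm (sum v G))\<^sup>2 \<le> c * sum w G"
  shows "v summable_on A"
proof -
  from w obtain L where lim: \<open>(sum w \<longlongrightarrow> L) (finite_subsets_at_top A)\<close>
    unfolding has_sum_def summable_on_def by blast
  have \<open>\<exists>P. eventually P (finite_subsets_at_top A) \<and>
              (\<forall>F F'. P F \<and> P F' \<longrightarrow> dist (sum v F) (sum v F') < e)\<close> if e0: \<open>e>0\<close> for e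
  proof -
    define d P where \<open>d = (e\<^sup>2 / 16) / (c + 1)\<close> and \<open>P F \<longleftrightarrow> finite F \<and> F \<subseteq> A \<and> dist (sum w F) L < d\<close> for F
    then have \<open>d > 0\<close> using c that by simp
    have ev_P: \<open>eventually P (finite_subsets_at_top A)\<close>
      using lim
      by (auto simp add: P_def[abs_def] \<open>0 < d\<close> eventually_conj_iff eventually_finite_subsets_at_top_weakI tendsto_iff)
    moreover have \<open>dist (sum v F1) (sum v F2) < e\<close> if \<open>P F1\<close> and \<open>P F2\<close> for F1 F2
    proof -
      from ev_P
      obtain F' where \<open>finite F'\<close> and \<open>F' \<subseteq> A\<close> and P_sup_F': \<open>finite F \<and> F \<supseteq> F' \<and> F \<subseteq> A \<Longrightarrow> P F\<close> for F
        by atomize_elim (simp add: eventually_finite_subsets_at_top)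
      define F where \<open>F = F' \<union> F1 \<union> F2\<close>
      have \<open>finite F\<close> and \<open>F \<subseteq> A\<close>
        using F_def P_def[abs_def] that \<open>finite F'\<close> \<open>F' \<subseteq> A\<close> by auto
      have dist_F: \<open>dist (sum w F) L < d\<close>
        by (metis F_def \<open>F \<subseteq> A\<close> P_def P_sup_F' \<open>finite F\<close> le_supE order_refl)
      have dist_F_subset: \<open>dist (sum v F) (sum v F'') < e / 2\<close> if F'': \<open>F'' \<subseteq> F\<close> \<open>P F''\<close> for F''
      proof -
        have fin: "finite (F - F'')" using \<open>finite F\<close> by simp
        have sub: "F - F'' \<subseteq> A" using \<open>F \<subseteq> A\<close> by auto
        have dd: \<open>dist (sum v F) (sum v F'') = norm (sum v (F-F''))\<close>
          unfolding dist_norm using \<open>finite F\<close> F'' by (subst sum_diff) auto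
        have sw: "sum w (F - F'') = sum w F - sum w F''"
          using \<open>finite F\<close> F'' by (subst sum_diff) auto
        have "sum w F - sum w F'' < 2 * d"
          using dist_F F'' unfolding P_def dist_real_def by linarith
        then have "c * sum w (F - F'') \<le> c * (2 * d)" unfolding sw using c by (intro mult_left_mono) auto
        also have "\<dots> < (e / 2)\<^sup>2"
        proof -
          have "c * (2 * d) \<le> (c + 1) * (2 * d)"
          proof (rule mult_right_mono)
            show "c \<le> c + 1" by simp
            show "0 \<le> 2 * d" using \<open>d > 0\<close> by simp
          qed
          also have "(c + 1) * (2 * d) = e\<^sup>2 / 8"
          proof -
            have c1: "c + 1 \<noteq> 0" using c by simp
            have "(c + 1) * d = e\<^sup>2 / 16" unfolding d_def by (subst times_divide_eq_right) (rule nonzero_mult_div_cancel_left[OF c1])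
            then have "(c + 1) * (2 * d) = 2 * (e\<^sup>2 / 16)" by (simp only: mult.left_commute)
            then show ?thesis by simp
          qed
          also have "\<dots> < e\<^sup>2 / 4" using e0 by simp
          also have "\<dots> = (e / 2)\<^sup>2" by (simp add: power_divide)
          finally show ?thesis .
        qed
        finally have "(norm (sum v (F - F'')))\<^sup>2 < (e / 2)\<^sup>2" by (rule order_le_less_trans[OF bnd[OF fin sub]])
        then have "norm (sum v (F - F'')) < e / 2" by (rule power2_less_imp_less) (use e0 in simp)
        then show ?thesis using dd by simp
      qed
      have \<open>dist (sum v F1) (sum v F2) \<le> dist (sum v F) (sum v F1) + dist (sum v F) (sum v F2)\<close>
        by (rule dist_triangle3)
      also have \<open>\<dots> < e / 2 + e / 2\<close>
        by (intro add_strict_mono dist_F_subset that) (auto simp: F_def)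
      finally show \<open>dist (sum v F1) (sum v F2) < e\<close> by simp
    qed
    ultimately show ?thesis by blast
  qed
  then have \<open>cauchy_filter (filtermap (sum v) (finite_subsets_at_top A))\<close>
    by (simp add: cauchy_filter_metric_filtermap)
  moreover have "complete (UNIV::'a set)"
    by (meson Cauchy_convergent UNIV_I complete_def convergent_def)
  ultimately obtain L' where \<open>(sum v \<longlongrightarrow> L') (finite_subsets_at_top A)\<close>
    using complete_uniform[where S=UNIV] by (force simp add: filterlim_def)
  then show ?thesis
    using summable_on_def has_sum_def by blast
qed

lemma cinner_sum_left: "cinner (sum v G) (y::'a::complex_inner) = (\<Sum>i\<in>G. cinner (v i) y)"
  by (rule bounded_bilinear.sum_left[OF bounded_bilinear_cinner])

lemma frame_op_hassum:
  fixes \<Lambda> :: "int \<Rightarrow> 'a::{complex_inner,complete_space} \<Rightarrow> 'b::complex_inner"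
  assumes bl: "\<forall>i\<in>I. bounded_clinear (\<Lambda> i)"
    and summ: "\<And>f. (\<lambda>i. (norm (\<Lambda> i f))\<^sup>2) summable_on I"
    and Bb: "\<And>f. (\<Sum>\<^sub>\<infinity>i\<in>I. (norm (\<Lambda> i f))\<^sup>2) \<le> B * (norm f)\<^sup>2"
  shows "((\<lambda>i. cinner (\<Lambda> i f) (\<Lambda> i g)) has_sum cinner (g_frame_op I \<Lambda> f) g) I"
proof -
  define v where "v i = cadjoint (\<Lambda> i) (\<Lambda> i f)" for i
  define w where "w i = (norm (\<Lambda> i f))\<^sup>2" for i
  define c where "c = max B 0"
  have c0: "0 \<le> c" by (simp add: c_def)
  have Bc: "(\<Sum>\<^sub>\<infinity>i\<in>I. (norm (\<Lambda> i y))\<^sup>2) \<le> c * (norm y)\<^sup>2" for y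
  proof -
    have "B * (norm y)\<^sup>2 \<le> c * (norm y)\<^sup>2" by (rule mult_right_mono) (simp_all add: c_def)
    then show ?thesis using Bb[of y] by linarith
  qed
  have vsum: "v summable_on I"
  proof (rule summable_by_sq[OF _ c0])
    show "w summable_on I" unfolding w_def by (rule summ)
    fix G assume G: "finite G" "G \<subseteq> I"
    define y where "y = sum v G"
    define a where "a i = norm (\<Lambda> i f)" for i
    define b where "b i = norm (\<Lambda> i y)" for i
    have "cinner y y = (\<Sum>i\<in>G. cinner (v i) y)" unfolding y_def by (rule cinner_sum_left)
    also have "\<dots> = (\<Sum>i\<in>G. cinner (\<Lambda> i f) (\<Lambda> i y))"
    proof (rule sum.cong[OF refl])
      fix i assume "i \<in> G"
      then have "bounded_clinear (\<Lambda> i)" using G bl by blast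
      then show "cinner (v i) y = cinner (\<Lambda> i f) (\<Lambda> i y)" unfolding v_def by (rule cadjoint_prop2)
    qed
    finally have "(norm y)\<^sup>2 = (\<Sum>i\<in>G. Re (cinner (\<Lambda> i f) (\<Lambda> i y)))"
      unfolding norm_sq_cinner by (simp add: Re_sum)
    also have "\<dots> \<le> (\<Sum>i\<in>G. a i * b i)"
    proof (rule sum_mono)
      fix i
      have "Re (cinner (\<Lambda> i f) (\<Lambda> i y)) \<le> cmod (cinner (\<Lambda> i f) (\<Lambda> i y))" by (rule complex_Re_le_cmod)
      also have "\<dots> \<le> a i * b i" unfolding a_def b_def by (rule cinner_CS)
      finally show "Re (cinner (\<Lambda> i f) (\<Lambda> i y)) \<le> a i * b i" .
    qed
    finally have yab: "(norm y)\<^sup>2 \<le> (\<Sum>i\<in>G. a i * b i)" .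
    have "((norm y)\<^sup>2)\<^sup>2 \<le> (\<Sum>i\<in>G. a i * b i)\<^sup>2" by (rule power_mono[OF yab]) simp
    also have "\<dots> \<le> (\<Sum>i\<in>G. (a i)\<^sup>2) * (\<Sum>i\<in>G. (b i)\<^sup>2)" by (rule Cauchy_Schwarz_ineq_sum)
    also have "\<dots> \<le> sum w G * (c * (norm y)\<^sup>2)"
    proof (rule mult_mono)
      show "(\<Sum>i\<in>G. (a i)\<^sup>2) \<le> sum w G" unfolding a_def w_def by simp
      have "(\<Sum>i\<in>G. (b i)\<^sup>2) \<le> (\<Sum>\<^sub>\<infinity>i\<in>I. (norm (\<Lambda> i y))\<^sup>2)"
        unfolding b_def by (rule finite_sum_le_infsum[OF summ G]) simp
      then show "(\<Sum>i\<in>G. (b i)\<^sup>2) \<le> c * (norm y)\<^sup>2" using Bc[of y] by linarith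
      show "0 \<le> (\<Sum>i\<in>G. (b i)\<^sup>2)" by (rule sum_nonneg) simp
      show "0 \<le> sum w G" unfolding w_def by (rule sum_nonneg) simp
    qed
    finally have main: "((norm y)\<^sup>2)\<^sup>2 \<le> (c * sum w G) * (norm y)\<^sup>2" by (simp add: mult_ac)
    show "(norm (sum v G))\<^sup>2 \<le> c * sum w G"
    proof (cases "norm y = 0")
      case True
      have "0 \<le> sum w G" unfolding w_def by (rule sum_nonneg) simp
      then show ?thesis using True c0 by (simp add: y_def)
    next
      case False
      then have p: "(norm y)\<^sup>2 > 0" by simp
      have "(norm y)\<^sup>2 * (norm y)\<^sup>2 \<le> (c * sum w G) * (norm y)\<^sup>2" using main by (simp add: power2_eq_square)
      then have "(norm y)\<^sup>2 \<le> c * sum w G" using p by (rule mult_right_le_imp_le)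
      then show ?thesis by (simp add: y_def)
    qed
  qed
  then have hs: "(v has_sum g_frame_op I \<Lambda> f) I"
    unfolding g_frame_op_def v_def[symmetric] by (rule has_sum_infsum)
  have "((\<lambda>i. cinner (v i) g) has_sum cinner (g_frame_op I \<Lambda> f) g) I"
    by (rule has_sum_bounded_linear[OF bounded_bilinear.bounded_linear_left[OF bounded_bilinear_cinner] hs])
  moreover have "cinner (v i) g = cinner (\<Lambda> i f) (\<Lambda> i g)" if "i \<in> I" for i
    unfolding v_def using bl that by (simp add: cadjoint_prop2)
  ultimately show ?thesis using has_sum_cong by (metis (no_types, lifting))
qed

lemma herm_of_real:
  fixes C :: "'a::complex_inner \<Rightarrow> 'a"
  assumes Cl: "bounded_clinear C" and im: "\<And>z. Im (cinner (C z) z) = 0"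
  shows "cinner (C x) y = cinner x (C y)"
proof -
  define a where "a = cinner (C x) y"
  define b where "b = cinner (C y) x"
  have add: "C (u + v) = C u + C v" for u v by (rule bounded_clinear_add[OF Cl])
  have sc: "C (c *\<^sub>C u) = c *\<^sub>C C u" for c u by (rule bounded_clinear_scaleC[OF Cl])
  have e1: "cinner (C (x + y)) (x + y) = cinner (C x) x + a + b + cinner (C y) y"
    unfolding add cinner_add_left cinner_add_right a_def b_def by (simp only: add.assoc add.left_commute)
  have e2: "cinner (C (x + \<i> *\<^sub>C y)) (x + \<i> *\<^sub>C y) = cinner (C x) x - \<i> * a + \<i> * b + cinner (C y) y"
  proof -
    have "cinner (C (x + \<i> *\<^sub>C y)) (x + \<i> *\<^sub>C y)
        = cinner (C x) x + cnj \<i> * a + \<i> * b + (\<i> * cnj \<i>) * cinner (C y) y"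
      unfolding add sc cinner_add_left cinner_add_right cinner_scaleC_left cinner_scaleC_right a_def b_def
      by (simp only: add.assoc add.left_commute mult.assoc distrib_left mult.left_commute)
    then show ?thesis by simp
  qed
  have "Im (cinner (C (x + y)) (x + y)) = 0" by (rule im)
  then have i1: "Im a + Im b = 0" unfolding e1 using im[of x] im[of y] by simp
  have "Im (cinner (C (x + \<i> *\<^sub>C y)) (x + \<i> *\<^sub>C y)) = 0" by (rule im)
  then have i2: "Re b - Re a = 0" unfolding e2 using im[of x] im[of y] by simp
  have "a = cnj b" using i1 i2 by (simp add: complex_eq_iff)
  then show ?thesis unfolding a_def b_def by (simp add: cinner_commute[of x "C y"])
qed

lemma glplus_props:
  fixes C :: "'a::complex_inner \<Rightarrow> 'a"
  assumes "GLplus C"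
  shows "bounded_clinear C" "\<And>x y. cinner (C x) y = cinner x (C y)"
    "\<exists>m>0. \<forall>x. m * (norm x)\<^sup>2 \<le> Re (cinner (C x) x)"
proof -
  from assms show Cl: "bounded_clinear C" unfolding GLplus_def by blast
  from assms have pos: "\<And>f. f \<noteq> 0 \<Longrightarrow> Im (cinner (C f) f) = 0 \<and> Re (cinner (C f) f) > 0"
    unfolding GLplus_def by blast
  from assms obtain D where D: "bounded_clinear D" "\<And>f. D (C f) = f" unfolding GLplus_def by blast
  have C0: "C 0 = 0" by (rule bounded_clinear_zero[OF Cl])
  have im: "Im (cinner (C z) z) = 0" for z
    using pos[of z] C0 by (cases "z = 0") auto
  have re: "0 \<le> Re (cinner (C z) z)" for z
    using pos[of z] C0 by (cases "z = 0") auto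
  show herm: "\<And>x y. cinner (C x) y = cinner x (C y)" by (rule herm_of_real[OF Cl im])
  obtain KC where KC: "KC > 0" "\<And>x. norm (C x) \<le> norm x * KC" using bounded_clinear_bound[OF Cl] by blast
  obtain KD where KD: "KD > 0" "\<And>x. norm (D x) \<le> norm x * KD" using bounded_clinear_bound[OF D(1)] by blast
  have hf: "hform (\<lambda>x y. cinner (C x) y)"
  proof
    show "cinner (C (x + y)) z = cinner (C x) z + cinner (C y) z" for x y z
      unfolding bounded_clinear_add[OF Cl] by (rule cinner_add_left)
    show "cinner (C (a *\<^sub>C x)) y = a * cinner (C x) y" for a x y
      unfolding bounded_clinear_scaleC[OF Cl] by (rule cinner_scaleC_left)
    show "cinner (C x) y = cnj (cinner (C y) x)" for x y unfolding herm[of x y] by (rule cinner_commute)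
    show "0 \<le> Re (cinner (C x) x)" for x by (rule re)
  qed
  have key: "(norm (C x))\<^sup>2 \<le> KC * Re (cinner (C x) x)" for x
  proof (cases "C x = 0")
    case True then show ?thesis using re[of x] KC by simp
  next
    case False
    have "(cmod (cinner (C x) (C x)))\<^sup>2 \<le> Re (cinner (C x) x) * Re (cinner (C (C x)) (C x))"
      by (rule hform.CS[OF hf])
    moreover have "cmod (cinner (C x) (C x)) = (norm (C x))\<^sup>2" unfolding cinner_self_norm norm_of_real by simp
    moreover have "Re (cinner (C (C x)) (C x)) \<le> KC * (norm (C x))\<^sup>2"
    proof -
      have "Re (cinner (C (C x)) (C x)) \<le> cmod (cinner (C (C x)) (C x))" by (rule complex_Re_le_cmod)
      also have "\<dots> \<le> norm (C (C x)) * norm (C x)" by (rule cinner_CS)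
      also have "\<dots> \<le> norm (C x) * KC * norm (C x)" using KC(2)[of "C x"] by (simp add: mult_right_mono)
      finally show ?thesis by (simp add: power2_eq_square mult_ac)
    qed
    ultimately have "((norm (C x))\<^sup>2)\<^sup>2 \<le> Re (cinner (C x) x) * (KC * (norm (C x))\<^sup>2)"
      using re[of x] by (smt (verit) mult_left_mono)
    then have "(norm (C x))\<^sup>2 * (norm (C x))\<^sup>2 \<le> (KC * Re (cinner (C x) x)) * (norm (C x))\<^sup>2"
      by (simp add: power2_eq_square mult_ac)
    moreover have "(norm (C x))\<^sup>2 > 0" using False by simp
    ultimately show ?thesis by (rule mult_right_le_imp_le)
  qed
  show "\<exists>m>0. \<forall>x. m * (norm x)\<^sup>2 \<le> Re (cinner (C x) x)"
  proof (intro exI conjI allI)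
    show "0 < 1 / (KD\<^sup>2 * KC)" using KC KD by simp
    fix x
    have "norm x \<le> norm (C x) * KD" using KD(2)[of "C x"] D(2)[of x] by simp
    then have "(norm x)\<^sup>2 \<le> (norm (C x) * KD)\<^sup>2" by (rule power_mono) simp
    also have "\<dots> = KD\<^sup>2 * (norm (C x))\<^sup>2" by (simp add: power_mult_distrib)
    also have "\<dots> \<le> KD\<^sup>2 * (KC * Re (cinner (C x) x))" by (rule mult_left_mono[OF key]) simp
    finally have "(norm x)\<^sup>2 \<le> (KD\<^sup>2 * KC) * Re (cinner (C x) x)" by (simp add: mult_ac)
    then show "1 / (KD\<^sup>2 * KC) * (norm x)\<^sup>2 \<le> Re (cinner (C x) x)"
      using KC KD by (simp add: field_simps)
  qed
qed

theorem mainTheorem2: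
  fixes I :: "int set"
    and \<Lambda> :: "int \<Rightarrow> 'a::{complex_inner,complete_space} \<Rightarrow> 'b::{complex_inner,complete_space}"
    and C C' :: "'a \<Rightarrow> 'a"
  assumes "g_frame I \<Lambda>"
    and "GLplus C" and "GLplus C'"
    and "\<forall>f. C (C' f) = C' (C f)"
    and "\<forall>f. C (g_frame_op I \<Lambda> f) = g_frame_op I \<Lambda> (C f)"
    and "\<forall>f. C' (g_frame_op I \<Lambda> f) = g_frame_op I \<Lambda> (C' f)"
  shows "controlled_g_frame I \<Lambda> C C'"
proof -
  note fr = assms(1)
  have CC': "C (C' f) = C' (C f)" for f using assms(4) by blast
  have CS: "C (g_frame_op I \<Lambda> f) = g_frame_op I \<Lambda> (C f)" for f using assms(5) by blast
  have C'S: "C' (g_frame_op I \<Lambda> f) = g_frame_op I \<Lambda> (C' f)" for f using assms(6) by blast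
  define S where "S = g_frame_op I \<Lambda>"
  from fr have bl: "\<forall>i\<in>I. bounded_clinear (\<Lambda> i)" unfolding g_frame_def by blast
  from fr obtain A0 B where AB: "0 < A0" "A0 \<le> B"
    and fb: "\<And>f. (\<lambda>i. (norm (\<Lambda> i f))\<^sup>2) summable_on I \<and>
             A0 * (norm f)\<^sup>2 \<le> (\<Sum>\<^sub>\<infinity>i\<in>I. (norm (\<Lambda> i f))\<^sup>2) \<and>
             (\<Sum>\<^sub>\<infinity>i\<in>I. (norm (\<Lambda> i f))\<^sup>2) \<le> B * (norm f)\<^sup>2"
    unfolding g_frame_def by blast
  have summ: "(\<lambda>i. (norm (\<Lambda> i f))\<^sup>2) summable_on I" for f using fb by blast
  have Bb: "(\<Sum>\<^sub>\<infinity>i\<in>I. (norm (\<Lambda> i f))\<^sup>2) \<le> B * (norm f)\<^sup>2" for f using fb by blast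
  have Ab: "A0 * (norm f)\<^sup>2 \<le> (\<Sum>\<^sub>\<infinity>i\<in>I. (norm (\<Lambda> i f))\<^sup>2)" for f using fb by blast
  have HS: "((\<lambda>i. cinner (\<Lambda> i f) (\<Lambda> i g)) has_sum cinner (S f) g) I" for f g
    unfolding S_def by (rule frame_op_hassum[OF bl summ Bb])
  have Sadd: "S (x + y) = S x + S y" for x y
  proof (rule cinner_ext)
    fix g
    have "((\<lambda>i. cinner (\<Lambda> i x) (\<Lambda> i g) + cinner (\<Lambda> i y) (\<Lambda> i g)) has_sum (cinner (S x) g + cinner (S y) g)) I"
      by (rule has_sum_add[OF HS HS])
    moreover have "((\<lambda>i. cinner (\<Lambda> i x) (\<Lambda> i g) + cinner (\<Lambda> i y) (\<Lambda> i g)) has_sum cinner (S (x + y)) g) I"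
    proof -
      have "((\<lambda>i. cinner (\<Lambda> i (x + y)) (\<Lambda> i g)) has_sum cinner (S (x + y)) g) I" by (rule HS)
      moreover have "cinner (\<Lambda> i (x + y)) (\<Lambda> i g) = cinner (\<Lambda> i x) (\<Lambda> i g) + cinner (\<Lambda> i y) (\<Lambda> i g)" if "i \<in> I" for i
        using bl that by (simp add: bounded_clinear_add cinner_add_left)
      ultimately show ?thesis using has_sum_cong by (metis (no_types, lifting))
    qed
    ultimately have "cinner (S (x + y)) g = cinner (S x) g + cinner (S y) g" using has_sum_unique by blast
    then show "cinner (S (x + y)) g = cinner (S x + S y) g" by (simp only: cinner_add_left)
  qed
  have Ssc: "S (c *\<^sub>C x) = c *\<^sub>C S x" for c x
  proof (rule cinner_ext)
    fix g
    have "((\<lambda>i. c * cinner (\<Lambda> i x) (\<Lambda> i g)) has_sum (c * cinner (S x) g)) I"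
      by (rule has_sum_cmult_right[OF HS])
    moreover have "((\<lambda>i. c * cinner (\<Lambda> i x) (\<Lambda> i g)) has_sum cinner (S (c *\<^sub>C x)) g) I"
    proof -
      have "((\<lambda>i. cinner (\<Lambda> i (c *\<^sub>C x)) (\<Lambda> i g)) has_sum cinner (S (c *\<^sub>C x)) g) I" by (rule HS)
      moreover have "cinner (\<Lambda> i (c *\<^sub>C x)) (\<Lambda> i g) = c * cinner (\<Lambda> i x) (\<Lambda> i g)" if "i \<in> I" for i
        using bl that by (simp add: bounded_clinear_scaleC cinner_scaleC_left)
      ultimately show ?thesis using has_sum_cong by (metis (no_types, lifting))
    qed
    ultimately have "cinner (S (c *\<^sub>C x)) g = c * cinner (S x) g" using has_sum_unique by blast
    then show "cinner (S (c *\<^sub>C x)) g = cinner (c *\<^sub>C S x) g" by (simp only: cinner_scaleC_left)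
  qed
  have Sherm: "cinner (S x) y = cinner x (S y)" for x y
  proof -
    have "((\<lambda>i. cnj (cinner (\<Lambda> i y) (\<Lambda> i x))) has_sum cnj (cinner (S y) x)) I"
      using HS[of y x] by simp
    moreover have "cnj (cinner (\<Lambda> i y) (\<Lambda> i x)) = cinner (\<Lambda> i x) (\<Lambda> i y)" for i
      by (rule cinner_commute[symmetric])
    ultimately have "((\<lambda>i. cinner (\<Lambda> i x) (\<Lambda> i y)) has_sum cnj (cinner (S y) x)) I" by simp
    then have "cinner (S x) y = cnj (cinner (S y) x)" using HS[of x y] has_sum_unique by blast
    then show ?thesis by (simp add: cinner_commute[of x "S y"])
  qed
  have Sre: "Re (cinner (S x) x) = (\<Sum>\<^sub>\<infinity>i\<in>I. (norm (\<Lambda> i x))\<^sup>2)" for x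
  proof -
    have "((\<lambda>i. Re (cinner (\<Lambda> i x) (\<Lambda> i x))) has_sum Re (cinner (S x) x)) I"
      by (rule has_sum_Re[OF HS])
    then have "((\<lambda>i. (norm (\<Lambda> i x))\<^sup>2) has_sum Re (cinner (S x) x)) I" by (simp add: norm_sq_cinner)
    then show ?thesis by (simp add: infsumI)
  qed
  have Slow: "A0 * (norm x)\<^sup>2 \<le> Re (cinner (S x) x)" for x unfolding Sre by (rule Ab)
  have Sup: "Re (cinner (S x) x) \<le> B * (norm x)\<^sup>2" for x unfolding Sre by (rule Bb)
  obtain mC where mC: "mC > 0" "\<And>x. mC * (norm x)\<^sup>2 \<le> Re (cinner (C x) x)"
    using glplus_props(3)[OF assms(2)] by blast
  obtain mC' where mC': "mC' > 0" "\<And>x. mC' * (norm x)\<^sup>2 \<le> Re (cinner (C' x) x)"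
    using glplus_props(3)[OF assms(3)] by blast
  have Cl: "bounded_clinear C" by (rule glplus_props(1)[OF assms(2)])
  have C'l: "bounded_clinear C'" by (rule glplus_props(1)[OF assms(3)])
  have Ch: "cinner (C x) y = cinner x (C y)" for x y by (rule glplus_props(2)[OF assms(2)])
  have C'h: "cinner (C' x) y = cinner x (C' y)" for x y by (rule glplus_props(2)[OF assms(3)])
  obtain KC where KC: "KC > 0" "\<And>x. norm (C x) \<le> norm x * KC" using bounded_clinear_bound[OF Cl] by blast
  obtain KC' where KC': "KC' > 0" "\<And>x. norm (C' x) \<le> norm x * KC'" using bounded_clinear_bound[OF C'l] by blast
  have Cup: "Re (cinner (C x) x) \<le> KC * (norm x)\<^sup>2" for x
  proof -
    have "Re (cinner (C x) x) \<le> cmod (cinner (C x) x)" by (rule complex_Re_le_cmod)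
    also have "\<dots> \<le> norm (C x) * norm x" by (rule cinner_CS)
    also have "\<dots> \<le> norm x * KC * norm x" using KC(2)[of x] by (simp add: mult_right_mono)
    finally show ?thesis by (simp add: power2_eq_square mult_ac)
  qed
  have app1: "mC' * mC * (norm x)\<^sup>2 \<le> Re (cinner (C (C' x)) x)" for x
  proof (rule posprod[where P = C and T = C' and M = KC])
    show "C (x + y) = C x + C y" for x y by (rule bounded_clinear_add[OF Cl])
    show "C (c *\<^sub>C x) = c *\<^sub>C C x" for c x by (rule bounded_clinear_scaleC[OF Cl])
  qed (use Ch mC Cup C'l C'h mC' CC' in auto)
  define T where "T x = C (C' x)" for x
  have Tl: "bounded_clinear T" unfolding T_def by (rule bounded_clinear_comp[OF Cl C'l])
  have Th: "cinner (T x) y = cinner x (T y)" for x y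
    unfolding T_def Ch C'h CC' ..
  have ST: "S (T x) = T (S x)" for x
    unfolding T_def S_def CS C'S ..
  have app2: "(mC' * mC) * A0 * (norm x)\<^sup>2 \<le> Re (cinner (S (T x)) x)" for x
  proof (rule posprod[where P = S and T = T and M = B])
  qed (use Sadd Ssc Sherm Slow AB Sup Tl Th app1 mC mC' ST in \<open>auto simp: T_def\<close>)
  have key: "cinner (S (C f)) (C' f) = cinner (S (T f)) f" for f
  proof -
    have "cinner (S (C f)) (C' f) = cinner (C' (S (C f))) f" by (rule C'h[symmetric])
    also have "C' (S (C f)) = S (C' (C f))" unfolding S_def by (rule C'S)
    also have "C' (C f) = T f" unfolding T_def by (rule CC'[symmetric])
    finally show ?thesis .
  qed
  have Yh: "cinner (S (T x)) y = cinner x (S (T y))" for x y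
    unfolding Sherm Th ST ..
  have HQ: "((\<lambda>i. cinner (\<Lambda> i (C f)) (\<Lambda> i (C' f))) has_sum cinner (S (T f)) f) I" for f
    using HS[of "C f" "C' f"] unfolding key .
  have Qim: "Im (cinner (S (T f)) f) = 0" for f
  proof -
    have "cinner (S (T f)) f = cnj (cinner (S (T f)) f)"
      using Yh[of f f] cinner_commute[of f "S (T f)"] by simp
    then have "Im (cinner (S (T f)) f) = Im (cnj (cinner (S (T f)) f))" by simp
    then show ?thesis by simp
  qed
  \<comment> \<open>upper bound via Cauchy-Schwarz for the S-form\<close>
  have hfS: "hform (\<lambda>x y. cinner (S x) y)"
  proof
    show "cinner (S (x + y)) z = cinner (S x) z + cinner (S y) z" for x y z
      unfolding Sadd by (rule cinner_add_left)
    show "cinner (S (a *\<^sub>C x)) y = a * cinner (S x) y" for a x y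
      unfolding Ssc by (rule cinner_scaleC_left)
    show "cinner (S x) y = cnj (cinner (S y) x)" for x y unfolding Sherm[of x y] by (rule cinner_commute)
    show "0 \<le> Re (cinner (S x) x)" for x
    proof -
      have "0 \<le> A0 * (norm x)\<^sup>2" using AB by simp
      then show ?thesis using Slow[of x] by linarith
    qed
  qed
  have B0: "0 \<le> B" using AB by simp
  have Qup: "Re (cinner (S (T f)) f) \<le> (B * KC * KC') * (norm f)\<^sup>2" for f
  proof -
    have "(Re (cinner (S (C f)) (C' f)))\<^sup>2 \<le> (cmod (cinner (S (C f)) (C' f)))\<^sup>2"
      using power_mono[OF abs_Re_le_cmod[of "cinner (S (C f)) (C' f)"] abs_ge_zero, of 2] by simp
    also have "\<dots> \<le> Re (cinner (S (C f)) (C f)) * Re (cinner (S (C' f)) (C' f))"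
      by (rule hform.CS[OF hfS])
    also have "\<dots> \<le> (B * (norm f * KC)\<^sup>2) * (B * (norm f * KC')\<^sup>2)"
    proof (rule mult_mono)
      have "Re (cinner (S (C f)) (C f)) \<le> B * (norm (C f))\<^sup>2" by (rule Sup)
      also have "\<dots> \<le> B * (norm f * KC)\<^sup>2" using KC(2)[of f] B0 by (intro mult_left_mono power_mono) auto
      finally show "Re (cinner (S (C f)) (C f)) \<le> B * (norm f * KC)\<^sup>2" .
      have "Re (cinner (S (C' f)) (C' f)) \<le> B * (norm (C' f))\<^sup>2" by (rule Sup)
      also have "\<dots> \<le> B * (norm f * KC')\<^sup>2" using KC'(2)[of f] B0 by (intro mult_left_mono power_mono) auto
      finally show "Re (cinner (S (C' f)) (C' f)) \<le> B * (norm f * KC')\<^sup>2" .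
      show "0 \<le> B * (norm f * KC)\<^sup>2" using B0 by simp
      show "0 \<le> Re (cinner (S (C' f)) (C' f))" by (rule hform.pos[OF hfS])
    qed
    also have "\<dots> = ((B * KC * KC') * (norm f)\<^sup>2)\<^sup>2" by (simp add: power_mult_distrib mult_ac power2_eq_square)
    finally have "\<bar>Re (cinner (S (C f)) (C' f))\<bar> \<le> \<bar>(B * KC * KC') * (norm f)\<^sup>2\<bar>" by (simp only: abs_le_square_iff)
    moreover have "\<bar>(B * KC * KC') * (norm f)\<^sup>2\<bar> = (B * KC * KC') * (norm f)\<^sup>2" using B0 KC KC' by simp
    ultimately show ?thesis unfolding key by linarith
  qed
  have bessel: "g_Bessel I \<Lambda>" unfolding g_Bessel_def using bl summ Bb by blast
  show ?thesis
    unfolding controlled_g_frame_def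
  proof (rule conjI[OF bessel], rule exI[of _ "(mC' * mC) * A0"], rule exI[of _ "B * KC * KC'"], intro conjI allI)
    show "0 < mC' * mC * A0" using mC mC' AB by simp
    fix f
    have hs: "((\<lambda>i. cinner (\<Lambda> i (C f)) (\<Lambda> i (C' f))) has_sum cinner (S (T f)) f) I" by (rule HQ)
    then show "(\<lambda>i. cinner (\<Lambda> i (C f)) (\<Lambda> i (C' f))) summable_on I" by (rule has_sum_imp_summable)
    have iv: "(\<Sum>\<^sub>\<infinity>i\<in>I. cinner (\<Lambda> i (C f)) (\<Lambda> i (C' f))) = cinner (S (T f)) f" by (rule infsumI[OF hs])
    show "Im (\<Sum>\<^sub>\<infinity>i\<in>I. cinner (\<Lambda> i (C f)) (\<Lambda> i (C' f))) = 0" unfolding iv by (rule Qim)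
    show "mC' * mC * A0 * (norm f)\<^sup>2 \<le> Re (\<Sum>\<^sub>\<infinity>i\<in>I. cinner (\<Lambda> i (C f)) (\<Lambda> i (C' f)))"
      unfolding iv by (rule app2)
    show "Re (\<Sum>\<^sub>\<infinity>i\<in>I. cinner (\<Lambda> i (C f)) (\<Lambda> i (C' f))) \<le> B * KC * KC' * (norm f)\<^sup>2"
      unfolding iv by (rule Qup)
  qed
qed


end
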